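(* Let $A=(A,\wedge,\vee,\cdot,\to,1)$ be a $\mathsf{DLCMI}$ and $f:A\to A$ a function. The following are equivalent: 1. $f$ is compatible. 2. There exists a function $g:A\times A\to A$ satisfying condition (M), compatible in the first variable, and such that for every $a\in A$, $f(a)=\min\{b\in A: g(a,b)\le b\}$. 3. There exists a function $\hat g:A\times A\to A$ satisfying condition (M), compatible in the first variable, and such that for all $a,b\in A$: (i) $\hat g(a,f(a))\le f(a)$ and (ii) $f(a)\le \hat g(a,b)\vee b$.
   Context: An algebra $(A,\wedge,\vee,\cdot,\to,1)$ of type $(2,2,2,2,0)$ is a $\mathsf{DLCMI}$ if for all $a,b,c\in A$: (1) $(A,\wedge,\vee)$ is a distributive lattice; (2) $1$ is its largest element; (3) $(A,\cdot,1)$ is a commutative monoid; (4) $(a\to b)\wedge(a\to c)=a\to(b\wedge c)$; (5) $(a\to c)\wedge(b\to c)=(a\vee b)\to c$; (6) $a\to a=1$; (7) $(a\vee b)\cdot c=(a\cdot c)\vee(b\cdot c)$; (8) $(a\to b)\cdot(b\to c)\le a\to c$; (9) $a\to b\le (a\cdot c)\to(b\cdot c)$. A unary function $h:A\to A$ is compatible if for every congruence $\theta$ of $A$, $(a,b)\in\theta$ implies $(h(a),h(b))\in\theta$. A function $g:A\times A\to A$ satisfies condition (M) if for all $a,b,c\in A$, $c\ge b$ implies $g(a,c)\le g(a,b)$. $g$ is compatible in the first variable if for every $c\in A$ the unary function $x\mapsto g(x,c)$ is compatible. *)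

theory Defs
  imports Main
begin

text \<open>A DLCMI on a type 'a: the lattice reduct is the type-class distributive lattice
  (inf = meet, sup = join, order = lattice order), 1 = top is its largest element,
  and the parameters m (product) and i (implication) are the remaining operations.\<close>

definition DLCMI :: "('a::{distrib_lattice,order_top} \<Rightarrow> 'a \<Rightarrow> 'a) \<Rightarrow> ('a \<Rightarrow> 'a \<Rightarrow> 'a) \<Rightarrow> bool" where
  "DLCMI m i \<longleftrightarrow>
     (\<forall>a b c. m (m a b) c = m a (m b c)) \<and>
     (\<forall>a b. m a b = m b a) \<and>
     (\<forall>a. m a top = a) \<and>
     (\<forall>a b c. inf (i a b) (i a c) = i a (inf b c)) \<and>
     (\<forall>a b c. inf (i a c) (i b c) = i (sup a b) c) \<and>
     (\<forall>a. i a a = top) \<and>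
     (\<forall>a b c. m (sup a b) c = sup (m a c) (m b c)) \<and>
     (\<forall>a b c. m (i a b) (i b c) \<le> i a c) \<and>
     (\<forall>a b c. i a b \<le> i (m a c) (m b c))"

definition congruence :: "('a::{distrib_lattice,order_top} \<Rightarrow> 'a \<Rightarrow> 'a) \<Rightarrow> ('a \<Rightarrow> 'a \<Rightarrow> 'a) \<Rightarrow> ('a \<times> 'a) set \<Rightarrow> bool" where
  "congruence m i \<theta> \<longleftrightarrow> equiv UNIV \<theta> \<and>
     (\<forall>a b c d. (a, b) \<in> \<theta> \<longrightarrow> (c, d) \<in> \<theta> \<longrightarrow>
        (inf a c, inf b d) \<in> \<theta> \<and> (sup a c, sup b d) \<in> \<theta> \<and>
        (m a c, m b d) \<in> \<theta> \<and> (i a c, i b d) \<in> \<theta>)"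

definition compatible :: "('a::{distrib_lattice,order_top} \<Rightarrow> 'a \<Rightarrow> 'a) \<Rightarrow> ('a \<Rightarrow> 'a \<Rightarrow> 'a) \<Rightarrow> ('a \<Rightarrow> 'a) \<Rightarrow> bool" where
  "compatible m i h \<longleftrightarrow> (\<forall>\<theta>. congruence m i \<theta> \<longrightarrow> (\<forall>a b. (a, b) \<in> \<theta> \<longrightarrow> (h a, h b) \<in> \<theta>))"

definition condM :: "('a::order \<Rightarrow> 'a \<Rightarrow> 'a) \<Rightarrow> bool" where
  "condM g \<longleftrightarrow> (\<forall>a b c. b \<le> c \<longrightarrow> g a c \<le> g a b)"

definition compatible_first :: "('a::{distrib_lattice,order_top} \<Rightarrow> 'a \<Rightarrow> 'a) \<Rightarrow> ('a \<Rightarrow> 'a \<Rightarrow> 'a) \<Rightarrow> ('a \<Rightarrow> 'a \<Rightarrow> 'a) \<Rightarrow> bool" where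
  "compatible_first m i g \<longleftrightarrow> (\<forall>c. compatible m i (\<lambda>x. g x c))"

end

theory Submission
  imports Defs
begin

lemma half:
  fixes m i :: "'a::{distrib_lattice,order_top} \<Rightarrow> 'a \<Rightarrow> 'a"
  assumes M: "condM g" and C: "compatible_first m i g"
    and h1: "\<And>a. g a (f a) \<le> f a" and h2: "\<And>a b. g a b \<le> b \<Longrightarrow> f a \<le> b"
    and th: "congruence m i \<theta>" and xy: "(x, y) \<in> \<theta>"
  shows "\<exists>c. f y \<le> c \<and> (c, f x) \<in> \<theta>"
proof -
  have eq: "equiv UNIV \<theta>" using th unfolding congruence_def by blast
  have ops: "\<And>a b c d. (a, b) \<in> \<theta> \<Longrightarrow> (c, d) \<in> \<theta> \<Longrightarrow> (sup a c, sup b d) \<in> \<theta>"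
    using th unfolding congruence_def by blast
  have refl: "\<And>z. (z, z) \<in> \<theta>" using eq by (simp add: equiv_def refl_on_def)
  define b where "b = f x"
  define c where "c = sup b (g y b)"
  have "(g x b, g y b) \<in> \<theta>" using C th xy unfolding compatible_first_def compatible_def by blast
  hence "(sup b (g x b), sup b (g y b)) \<in> \<theta>" using ops refl by blast
  moreover have "sup b (g x b) = b" using h1 b_def by (simp add: sup_absorb1)
  ultimately have cb: "(b, c) \<in> \<theta>" unfolding c_def by simp
  have "g y c \<le> g y b" using M unfolding condM_def c_def by simp
  hence "g y c \<le> c" unfolding c_def by (meson le_supI2 order_trans order_refl)
  hence "f y \<le> c" using h2 by blast
  moreover have "(c, f x) \<in> \<theta>" using cb eq b_def by (metis equiv_def sym_def)
  ultimately show ?thesis by blast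
qed

lemma key:
  fixes m i :: "'a::{distrib_lattice,order_top} \<Rightarrow> 'a \<Rightarrow> 'a"
  assumes M: "condM g" and C: "compatible_first m i g"
    and h1: "\<And>a. g a (f a) \<le> f a" and h2: "\<And>a b. g a b \<le> b \<Longrightarrow> f a \<le> b"
  shows "compatible m i f"
  unfolding compatible_def
proof (intro allI impI)
  fix \<theta> x y assume th: "congruence m i \<theta>" and xy: "(x, y) \<in> \<theta>"
  have eq: "equiv UNIV \<theta>" using th unfolding congruence_def by blast
  have ops: "\<And>a b c d. (a, b) \<in> \<theta> \<Longrightarrow> (c, d) \<in> \<theta> \<Longrightarrow> (inf a c, inf b d) \<in> \<theta>"
    using th unfolding congruence_def by blast
  have refl: "\<And>z. (z, z) \<in> \<theta>" using eq by (simp add: equiv_def refl_on_def)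
  have sy: "\<And>u v. (u, v) \<in> \<theta> \<Longrightarrow> (v, u) \<in> \<theta>" using eq by (metis equiv_def sym_def)
  have tr: "\<And>u v w. (u, v) \<in> \<theta> \<Longrightarrow> (v, w) \<in> \<theta> \<Longrightarrow> (u, w) \<in> \<theta>"
    using eq by (metis equiv_def trans_def)
  obtain c where c1: "f y \<le> c" and c2: "(c, f x) \<in> \<theta>"
    using half[OF M C h1 h2 th xy] by blast
  obtain d where d1: "f x \<le> d" and d2: "(d, f y) \<in> \<theta>"
    using half[OF M C h1 h2 th sy[OF xy]] by blast
  have "(inf (f y) c, inf (f y) (f x)) \<in> \<theta>" using ops refl c2 by blast
  hence A: "(f y, inf (f x) (f y)) \<in> \<theta>" using c1 by (metis inf_absorb1 inf_commute)
  have "(inf (f x) d, inf (f x) (f y)) \<in> \<theta>" using ops refl d2 by blast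
  hence B: "(f x, inf (f x) (f y)) \<in> \<theta>" using d1 by (simp add: inf_absorb1)
  show "(f x, f y) \<in> \<theta>" using tr[OF B sy[OF A]] .
qed

theorem proposition4p8:
  fixes m i :: "'a::{distrib_lattice,order_top} \<Rightarrow> 'a \<Rightarrow> 'a" and f :: "'a \<Rightarrow> 'a"
  assumes "DLCMI m i"
  shows "(compatible m i f
           \<longleftrightarrow> (\<exists>g. condM g \<and> compatible_first m i g \<and>
                   (\<forall>a. g a (f a) \<le> f a \<and> (\<forall>b. g a b \<le> b \<longrightarrow> f a \<le> b))))
       \<and> (compatible m i f
           \<longleftrightarrow> (\<exists>g. condM g \<and> compatible_first m i g \<and>
                   (\<forall>a b. g a (f a) \<le> f a \<and> f a \<le> sup (g a b) b)))"
proof (intro conjI iffI)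
  assume c: "compatible m i f"
  have M: "condM (\<lambda>a b. f a)" unfolding condM_def by simp
  have C: "compatible_first m i (\<lambda>a b. f a)" using c unfolding compatible_first_def by simp
  show "\<exists>g. condM g \<and> compatible_first m i g \<and>
                   (\<forall>a. g a (f a) \<le> f a \<and> (\<forall>b. g a b \<le> b \<longrightarrow> f a \<le> b))"
    using M C by (intro exI[of _ "\<lambda>a b. f a"]) simp
  show "\<exists>g. condM g \<and> compatible_first m i g \<and>
                   (\<forall>a b. g a (f a) \<le> f a \<and> f a \<le> sup (g a b) b)"
    using M C by (intro exI[of _ "\<lambda>a b. f a"]) simp
next
  assume "\<exists>g. condM g \<and> compatible_first m i g \<and>
                   (\<forall>a. g a (f a) \<le> f a \<and> (\<forall>b. g a b \<le> b \<longrightarrow> f a \<le> b))"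
  then obtain g where "condM g" "compatible_first m i g"
    "\<And>a. g a (f a) \<le> f a" "\<And>a b. g a b \<le> b \<Longrightarrow> f a \<le> b" by blast
  thus "compatible m i f" by (rule key)
next
  assume "\<exists>g. condM g \<and> compatible_first m i g \<and>
                   (\<forall>a b. g a (f a) \<le> f a \<and> f a \<le> sup (g a b) b)"
  then obtain g where g: "condM g" "compatible_first m i g"
    "\<And>a. g a (f a) \<le> f a" "\<And>a b. f a \<le> sup (g a b) b" by blast
  have "\<And>a b. g a b \<le> b \<Longrightarrow> f a \<le> b"
    using g(4) by (metis sup_absorb2)
  thus "compatible m i f" using key[OF g(1-3)] by blast
qed

end
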